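(* Let $\mathcal{A}$ be a BST mergesort algorithm which sorts the permutation $\pi$ of $\{1,\dots,n\}$ using $\mathcal{A}(\pi)$ accesses. Then $\mathrm{OPT}_{\mathrm{BST}}(\pi)\in O(\mathcal{A}(\pi))$.
   Context: BST model: the keys $\{1,\dots,n\}$ are stored in a BST; an access sequence is served in order, each search starting with a pointer at the root and at each step moving the pointer to the parent or a child, or rotating the current node with its parent, each at unit cost; the search must visit its key. $\mathrm{OPT}_{\mathrm{BST}}(\pi)$ is the minimum cost of an offline BST algorithm (knowing the whole sequence in advance) serving $\pi$ as an access sequence. A top tree of a binary tree $T$ is a connected set of nodes containing the root. BST merge: given BSTs $T_A,T_B$ with disjoint keys, for some top trees $\tau_a$ of $T_A$, $\tau_b$ of $T_B$, it returns a BST $T$ on the union of keys such that for some top tree $\tau$ of $T$, $\tau=\tau_a\cup\tau_b$, the subtrees of $T$ hanging off $\tau$ are unchanged subtrees of $T_A$ or $T_B$, and $\tau$ contains the block boundaries (in the sorted merged order, a block is a maximal contiguous run of keys from the same input; its boundaries are its first and last keys). Number of accesses: $|\tau|$. BST mergesort: on input of size 1 returns it; otherwise splits the input sequence into two contiguous parts each of size at least 1, recursively BST-mergesorts each, and BST-merges the results. Number of accesses: the sum of accesses over all merges. *)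

theory Defs
  imports Main "HOL-Library.Tree"
begin

datatype dir = DL | DR

text \<open>A pointer position in a tree is a path from the root.\<close>
fun subtree_at :: "'a tree \<Rightarrow> dir list \<Rightarrow> 'a tree" where
  "subtree_at t [] = t"
| "subtree_at Leaf (d # p) = Leaf"
| "subtree_at (Node l x r) (DL # p) = subtree_at l p"
| "subtree_at (Node l x r) (DR # p) = subtree_at r p"

definition value_at :: "'a tree \<Rightarrow> dir list \<Rightarrow> 'a option" where
  "value_at t p = (case subtree_at t p of Leaf \<Rightarrow> None | Node _ x _ \<Rightarrow> Some x)"

fun mod_at :: "dir list \<Rightarrow> ('a tree \<Rightarrow> 'a tree) \<Rightarrow> 'a tree \<Rightarrow> 'a tree" where
  "mod_at [] f t = f t"
| "mod_at (d # p) f Leaf = Leaf"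
| "mod_at (DL # p) f (Node l x r) = Node (mod_at p f l) x r"
| "mod_at (DR # p) f (Node l x r) = Node l x (mod_at p f r)"

fun rot_up :: "dir \<Rightarrow> 'a tree \<Rightarrow> 'a tree" where
  "rot_up DL (Node (Node a x b) y c) = Node a x (Node b y c)"
| "rot_up DR (Node a y (Node b x c)) = Node (Node a y b) x c"
| "rot_up d t = t"

text \<open>One unit-cost step: move to parent, move to a child, or rotate the
  current node with its parent (the pointer stays on the rotated node).\<close>
definition bst_step :: "(('a tree \<times> dir list) \<times> ('a tree \<times> dir list)) set" where
  "bst_step = {((t, p), (t', p')). subtree_at t p \<noteq> Leaf \<and>
     ((p \<noteq> [] \<and> t' = t \<and> p' = butlast p)
    \<or> (\<exists>d. t' = t \<and> p' = p @ [d] \<and> subtree_at t (p @ [d]) \<noteq> Leaf)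
    \<or> (\<exists>q d. p = q @ [d] \<and> p' = q \<and> t' = mod_at q (rot_up d) t))}"

definition search :: "'a tree \<Rightarrow> 'a \<Rightarrow> 'a tree \<Rightarrow> nat \<Rightarrow> bool" where
  "search t k t' m \<longleftrightarrow> (\<exists>c q m1 m2. ((t, []), c) \<in> bst_step ^^ m1 \<and>
      value_at (fst c) (snd c) = Some k \<and> (c, (t', q)) \<in> bst_step ^^ m2 \<and> m = m1 + m2)"

fun serve :: "'a tree \<Rightarrow> 'a list \<Rightarrow> nat \<Rightarrow> bool" where
  "serve t [] m \<longleftrightarrow> m = 0"
| "serve t (k # ks) m \<longleftrightarrow> (\<exists>t' m1 m2. search t k t' m1 \<and> serve t' ks m2 \<and> m = m1 + m2)"

text \<open>Offline optimum: the initial BST on the keys is chosen freely as well.\<close>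
definition opt_bst :: "nat list \<Rightarrow> nat" where
  "opt_bst \<pi> = (LEAST m. \<exists>t. bst t \<and> set_tree t = set \<pi> \<and> serve t \<pi> m)"

text \<open>S (a set of keys = nodes) is a top tree of T: connected, containing the root.\<close>
fun top_tree :: "'a tree \<Rightarrow> 'a set \<Rightarrow> bool" where
  "top_tree Leaf S = False"
| "top_tree (Node l x r) S \<longleftrightarrow> x \<in> S \<and> S \<subseteq> set_tree (Node l x r)
     \<and> (S \<inter> set_tree l = {} \<or> top_tree l (S \<inter> set_tree l))
     \<and> (S \<inter> set_tree r = {} \<or> top_tree r (S \<inter> set_tree r))"

fun hanging :: "'a set \<Rightarrow> 'a tree \<Rightarrow> 'a tree set" where
  "hanging S Leaf = {}"
| "hanging S (Node l x r) =
     (if x \<in> S then hanging S l \<union> hanging S r else {Node l x r})"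

text \<open>Block boundaries of the merged order of A and B.\<close>
definition block_first :: "'a::linorder set \<Rightarrow> 'a set \<Rightarrow> 'a \<Rightarrow> bool" where
  "block_first A B x \<longleftrightarrow>
     (x \<in> A \<and> \<not> (\<exists>y\<in>A. y < x \<and> {y<..<x} \<inter> B = {}))
   \<or> (x \<in> B \<and> \<not> (\<exists>y\<in>B. y < x \<and> {y<..<x} \<inter> A = {}))"

definition block_last :: "'a::linorder set \<Rightarrow> 'a set \<Rightarrow> 'a \<Rightarrow> bool" where
  "block_last A B x \<longleftrightarrow>
     (x \<in> A \<and> \<not> (\<exists>y\<in>A. x < y \<and> {x<..<y} \<inter> B = {}))
   \<or> (x \<in> B \<and> \<not> (\<exists>y\<in>B. x < y \<and> {x<..<y} \<inter> A = {}))"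

definition block_boundaries :: "'a::linorder set \<Rightarrow> 'a set \<Rightarrow> 'a set" where
  "block_boundaries A B = {x. block_first A B x \<or> block_last A B x}"

definition bst_merge :: "'a::linorder tree \<Rightarrow> 'a tree \<Rightarrow> 'a tree \<Rightarrow> nat \<Rightarrow> bool" where
  "bst_merge TA TB T m \<longleftrightarrow>
     bst TA \<and> bst TB \<and> set_tree TA \<inter> set_tree TB = {} \<and>
     (\<exists>\<tau>a \<tau>b. top_tree TA \<tau>a \<and> top_tree TB \<tau>b \<and>
        bst T \<and> set_tree T = set_tree TA \<union> set_tree TB \<and>
        top_tree T (\<tau>a \<union> \<tau>b) \<and>
        (\<forall>s \<in> hanging (\<tau>a \<union> \<tau>b) T. s \<in> subtrees TA \<or> s \<in> subtrees TB) \<and>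
        block_boundaries (set_tree TA) (set_tree TB) \<subseteq> \<tau>a \<union> \<tau>b \<and>
        m = card (\<tau>a \<union> \<tau>b))"

inductive msort :: "'a::linorder list \<Rightarrow> 'a tree \<Rightarrow> nat \<Rightarrow> bool" where
  single: "msort [x] (Node Leaf x Leaf) 0"
| merge: "\<lbrakk> xs \<noteq> []; ys \<noteq> []; msort xs TA a; msort ys TB b; bst_merge TA TB T m \<rbrakk>
          \<Longrightarrow> msort (xs @ ys) T (a + b + m)"

end

theory Submission
  imports Defs
begin


lemma subtree_at_Leaf[simp]: "subtree_at Leaf p = Leaf"
  by (cases p) auto

lemma subtree_at_append: "subtree_at t (p @ q) = subtree_at (subtree_at t p) q"
  by (induction t p rule: subtree_at.induct) auto

lemma subtree_at_prefix: "subtree_at t (p @ q) \<noteq> Leaf \<Longrightarrow> subtree_at t p \<noteq> Leaf"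
  by (metis subtree_at_Leaf subtree_at_append)

lemma subtree_at_mod_at: "subtree_at t p \<noteq> Leaf \<Longrightarrow> subtree_at (mod_at p f t) (p @ q) = subtree_at (f (subtree_at t p)) q"
  by (induction p f t rule: mod_at.induct) auto

lemma mod_at_comp: "mod_at p f (mod_at p g t) = mod_at p (f \<circ> g) t"
  by (induction p g t rule: mod_at.induct) auto

lemma mod_at_id: "f (subtree_at t p) = subtree_at t p \<Longrightarrow> mod_at p f t = t"
  by (induction p f t rule: mod_at.induct) auto

lemma step_iff: "(((t,p),(t',p')) \<in> bst_step) \<longleftrightarrow> subtree_at t p \<noteq> Leaf \<and>
     ((p \<noteq> [] \<and> t' = t \<and> p' = butlast p)
    \<or> (\<exists>d. t' = t \<and> p' = p @ [d] \<and> subtree_at t (p @ [d]) \<noteq> Leaf)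
    \<or> (\<exists>q d. p = q @ [d] \<and> p' = q \<and> t' = mod_at q (rot_up d) t))"
  unfolding bst_step_def by simp

lemma relpow_trans: "(a,b) \<in> R ^^ m \<Longrightarrow> (b,c) \<in> R ^^ n \<Longrightarrow> (a,c) \<in> R ^^ (m+n)"
  by (metis relcomp.relcompI relpow_add)

lemma step1: "(a,b) \<in> bst_step \<Longrightarrow> (a,b) \<in> bst_step ^^ 1" by simp

lemma step_rev: assumes "(c, c') \<in> bst_step" shows "\<exists>i\<le>3. (c', c) \<in> bst_step ^^ i"
proof -
  obtain t p t' p' where cc: "c = (t,p)" "c' = (t',p')" by (cases c, cases c') auto
  from assms[unfolded cc step_iff] have ne: "subtree_at t p \<noteq> Leaf" and
    cs: "(p \<noteq> [] \<and> t' = t \<and> p' = butlast p)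
    \<or> (\<exists>d. t' = t \<and> p' = p @ [d] \<and> subtree_at t (p @ [d]) \<noteq> Leaf)
    \<or> (\<exists>q d. p = q @ [d] \<and> p' = q \<and> t' = mod_at q (rot_up d) t)" by auto
  show ?thesis
  proof (cases "p \<noteq> [] \<and> t' = t \<and> p' = butlast p")
    case True
    then have "p = p' @ [last p]" by auto
    with True ne have "((t',p'),(t,p)) \<in> bst_step"
      unfolding step_iff by (metis subtree_at_prefix)
    then show ?thesis unfolding cc by (intro exI[of _ 1]) auto
  next
    case F1: False
    show ?thesis
    proof (cases "\<exists>d. t' = t \<and> p' = p @ [d] \<and> subtree_at t (p @ [d]) \<noteq> Leaf")
      case True
      then have "((t',p'),(t,p)) \<in> bst_step" unfolding step_iff by auto
      then show ?thesis unfolding cc by (intro exI[of _ 1]) auto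
    next
      case False
      with F1 cs obtain q d where qd: "p = q @ [d]" "p' = q" "t' = mod_at q (rot_up d) t" by auto
      have nq: "subtree_at t q \<noteq> Leaf" using ne qd subtree_at_prefix by blast
      then obtain a y b where s: "subtree_at t q = Node a y b" by (cases "subtree_at t q") auto
      show ?thesis
      proof (cases d)
        case DL
        have "a \<noteq> Leaf" using ne qd DL s subtree_at_append[of t q "[DL]"] by auto
        then obtain a1 x a2 where a: "a = Node a1 x a2" by (cases a) auto
        have st': "subtree_at t' (q @ r) = subtree_at (Node a1 x (Node a2 y b)) r" for r
          using subtree_at_mod_at[OF nq, of "rot_up d" r] qd s a DL by simp
        have 1: "((t', q), (t', q @ [DR])) \<in> bst_step"
          unfolding step_iff using st'[of "[]"] st'[of "[DR]"] by auto
        have bk: "mod_at q (rot_up DR) t' = t"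
          using qd DL mod_at_comp[of q "rot_up DR" "rot_up DL" t] mod_at_id[of "rot_up DR \<circ> rot_up DL" t q] s a
          by simp
        have 2: "((t', q @ [DR]), (t, q)) \<in> bst_step"
          unfolding step_iff using st'[of "[DR]"] bk by auto
        have 3: "((t, q), (t, q @ [DL])) \<in> bst_step"
          unfolding step_iff using nq ne qd DL by auto
        have "((t',q),(t,q@[DL])) \<in> bst_step ^^ 3"
          using relpow_trans[OF relpow_trans[OF step1[OF 1] step1[OF 2]] step1[OF 3]] by (simp del: relpow.simps add: numeral_3_eq_3)
        then show ?thesis unfolding cc qd DL by (intro exI[of _ 3]) auto
      next
        case DR
        have "b \<noteq> Leaf" using ne qd DR s subtree_at_append[of t q "[DR]"] by auto
        then obtain b1 x b2 where b: "b = Node b1 x b2" by (cases b) auto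
        have st': "subtree_at t' (q @ r) = subtree_at (Node (Node a y b1) x b2) r" for r
          using subtree_at_mod_at[OF nq, of "rot_up d" r] qd s b DR by simp
        have 1: "((t', q), (t', q @ [DL])) \<in> bst_step"
          unfolding step_iff using st'[of "[]"] st'[of "[DL]"] by auto
        have bk: "mod_at q (rot_up DL) t' = t"
          using qd DR mod_at_comp[of q "rot_up DL" "rot_up DR" t] mod_at_id[of "rot_up DL \<circ> rot_up DR" t q] s b
          by simp
        have 2: "((t', q @ [DL]), (t, q)) \<in> bst_step"
          unfolding step_iff using st'[of "[DL]"] bk by auto
        have 3: "((t, q), (t, q @ [DR])) \<in> bst_step"
          unfolding step_iff using nq ne qd DR by auto
        have "((t',q),(t,q@[DR])) \<in> bst_step ^^ 3"
          using relpow_trans[OF relpow_trans[OF step1[OF 1] step1[OF 2]] step1[OF 3]] by (simp del: relpow.simps add: numeral_3_eq_3)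
        then show ?thesis unfolding cc qd DR by (intro exI[of _ 3]) auto
      qed
    qed
  qed
qed

lemma steps_rev: "(c, c') \<in> bst_step ^^ j \<Longrightarrow> \<exists>i\<le>3*j. (c', c) \<in> bst_step ^^ i"
proof (induction j arbitrary: c')
  case 0 then show ?case by auto
next
  case (Suc j)
  then obtain c'' where a: "(c,c'') \<in> bst_step ^^ j" and b: "(c'',c') \<in> bst_step" by auto
  obtain i1 where i1: "i1 \<le> 3*j" "(c'',c) \<in> bst_step ^^ i1" using Suc.IH[OF a] by auto
  obtain i2 where i2: "i2 \<le> 3" "(c',c'') \<in> bst_step ^^ i2" using step_rev[OF b] by auto
  have "(c',c) \<in> bst_step ^^ (i2+i1)" using relpow_trans[OF i2(2) i1(2)] .
  then show ?case using i1 i2 by (intro exI[of _ "i2+i1"]) auto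
qed

lemma step_liftR: "((r,p),(r',p')) \<in> bst_step \<Longrightarrow> ((Node l x r, DR#p),(Node l x r', DR#p')) \<in> bst_step"
  unfolding step_iff
  apply (elim conjE disjE exE)
  apply (auto simp: butlast.simps)
  done

lemma steps_liftR: "((r,p),(r',p')) \<in> bst_step ^^ j \<Longrightarrow> ((Node l x r, DR#p),(Node l x r', DR#p')) \<in> bst_step ^^ j"
proof (induction j arbitrary: r' p')
  case 0 then show ?case by auto
next
  case (Suc j)
  then obtain c where a: "((r,p),c) \<in> bst_step ^^ j" and b: "(c,(r',p')) \<in> bst_step" by auto
  obtain r'' p'' where c: "c = (r'',p'')" by (cases c)
  show ?case using Suc.IH[of r'' p''] a b c step_liftR[of r'' p'' r' p' l x] by auto
qed


section \<open>Flattening with respect to a top set\<close>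

type_synonym 'a item = "'a tree + 'a"

fun flat :: "'a set \<Rightarrow> 'a tree \<Rightarrow> 'a item list" where
  "flat S Leaf = [Inl Leaf]"
| "flat S (Node l x r) = (if x \<in> S then flat S l @ Inr x # flat S r else [Inl (Node l x r)])"

fun alt :: "'a item list \<Rightarrow> bool" where
  "alt [Inl h] = True"
| "alt (Inl h # Inr x # rest) = alt rest"
| "alt _ = False"

fun sp :: "'a item list \<Rightarrow> 'a tree" where
  "sp [Inl h] = h"
| "sp (Inl h # Inr x # rest) = Node h x (sp rest)"
| "sp _ = Leaf"

definition rootok :: "'a set \<Rightarrow> 'a tree \<Rightarrow> bool" where
  "rootok S h \<longleftrightarrow> (case h of Leaf \<Rightarrow> True | Node l x r \<Rightarrow> x \<notin> S)"

fun keys :: "'a item \<Rightarrow> 'a set" where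
  "keys (Inl h) = set_tree h"
| "keys (Inr x) = {x}"

definition lt_item :: "'a::linorder item \<Rightarrow> 'a item \<Rightarrow> bool" where
  "lt_item a b \<longleftrightarrow> (\<forall>u\<in>keys a. \<forall>v\<in>keys b. u < v)"

lemma alt_app: "alt xs \<Longrightarrow> alt ys \<Longrightarrow> alt (xs @ Inr x # ys)"
  by (induction xs rule: alt.induct) auto

lemma alt_split: "alt (xs @ Inr x # ys) \<Longrightarrow> alt xs \<and> alt ys"
proof (induction xs rule: alt.induct)
  case (2 h y rest) then show ?case by auto
next
  case (1 h) then show ?case by auto
qed auto

lemma alt_noInr: "alt L \<Longrightarrow> (\<forall>y. Inr y \<notin> set L) \<Longrightarrow> \<exists>z. L = [Inl z]"
  by (induction L rule: alt.induct) auto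

lemma alt_flat: "alt (flat S t)"
  by (induction t) (auto intro: alt_app)

lemma flat_Inr: "Inr y \<in> set (flat S t) \<Longrightarrow> y \<in> S"
  by (induction t) (auto split: if_splits)

lemma flat_Inl_rootok: "Inl h \<in> set (flat S t) \<Longrightarrow> rootok S h"
  by (induction t) (auto split: if_splits simp: rootok_def)

lemma flat_keys: "\<Union>(keys ` set (flat S t)) = set_tree t"
  by (induction t) auto

lemma flat_sorted: "bst t \<Longrightarrow> sorted_wrt lt_item (flat S t)"
proof (induction t)
  case (Node l x r)
  have kl: "\<forall>it\<in>set (flat S l). \<forall>u\<in>keys it. u \<in> set_tree l" using flat_keys[of S l] by blast
  have kr: "\<forall>it\<in>set (flat S r). \<forall>u\<in>keys it. u \<in> set_tree r" using flat_keys[of S r] by blast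
  show ?case using Node kl kr
    by (auto simp: sorted_wrt_append lt_item_def) (meson less_trans)+
qed simp

lemma flat_bst: "sorted_wrt lt_item (flat S t) \<Longrightarrow> (\<forall>h. Inl h \<in> set (flat S t) \<longrightarrow> bst h) \<Longrightarrow> bst t"
proof (induction t)
  case (Node l x r)
  show ?case
  proof (cases "x \<in> S")
    case True
    have kl: "\<forall>u\<in>set_tree l. \<exists>it\<in>set (flat S l). u\<in>keys it" using flat_keys[of S l] by blast
    have kr: "\<forall>u\<in>set_tree r. \<exists>it\<in>set (flat S r). u\<in>keys it" using flat_keys[of S r] by blast
    from Node.prems True have s: "sorted_wrt lt_item (flat S l @ Inr x # flat S r)" by simp
    then have "\<forall>u\<in>set_tree l. u < x" using kl by (force simp: sorted_wrt_append lt_item_def)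
    moreover have "\<forall>u\<in>set_tree r. x < u" using kr s by (force simp: sorted_wrt_append lt_item_def)
    moreover have "bst l" "bst r" using Node True s by (auto simp: sorted_wrt_append)
    ultimately show ?thesis by simp
  next
    case False then show ?thesis using Node.prems by simp
  qed
qed simp

lemma flat_Inl_bst: "Inl h \<in> set (flat S t) \<Longrightarrow> bst t \<Longrightarrow> bst h"
  by (induction t) (auto split: if_splits)

lemma flat_hanging: "P \<in> hanging S t \<Longrightarrow> Inl P \<in> set (flat S t)"
  by (induction t) (auto split: if_splits)

lemma top_tree_flat: "top_tree t T \<Longrightarrow> T \<subseteq> S \<Longrightarrow> y \<in> T \<Longrightarrow> Inr y \<in> set (flat S t)"
proof (induction t arbitrary: T)
  case (Node l x r)
  have xS: "x \<in> S" using Node by auto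
  have "y = x \<or> y \<in> T \<inter> set_tree l \<or> y \<in> T \<inter> set_tree r" using Node.prems by auto
  then show ?case
  proof (elim disjE)
    assume "y \<in> T \<inter> set_tree l"
    then have "top_tree l (T \<inter> set_tree l)" using Node.prems by auto
    then have "Inr y \<in> set (flat S l)" using Node.IH(1) Node.prems \<open>y \<in> T \<inter> set_tree l\<close> by blast
    then show ?thesis using xS by simp
  next
    assume "y \<in> T \<inter> set_tree r"
    then have "top_tree r (T \<inter> set_tree r)" using Node.prems by auto
    then have "Inr y \<in> set (flat S r)" using Node.IH(2) Node.prems \<open>y \<in> T \<inter> set_tree r\<close> by blast
    then show ?thesis using xS by simp
  qed (use xS in simp)
qed simp

lemma flat_sp: "alt L \<Longrightarrow> (\<forall>h. Inl h \<in> set L \<longrightarrow> rootok S h) \<Longrightarrow> (\<forall>y. Inr y \<in> set L \<longrightarrow> y \<in> S) \<Longrightarrow> flat S (sp L) = L"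
proof (induction L rule: alt.induct)
  case (1 h) then show ?case by (cases h) (auto simp: rootok_def)
next
  case (2 h x rest)
  then have "flat S h = [Inl h]" by (cases h) (auto simp: rootok_def)
  with 2 show ?case by auto
qed auto

lemma sp_app_ne: "alt xs \<Longrightarrow> sp (xs @ Inr z # ys) \<noteq> Leaf"
  by (induction xs rule: alt.induct) auto

section \<open>Rotating the top part into a right spine\<close>

fun tc :: "'a set \<Rightarrow> 'a tree \<Rightarrow> nat" where
  "tc S Leaf = 0"
| "tc S (Node l x r) = (if x \<in> S then 1 + tc S l + tc S r else 0)"

fun ns :: "'a set \<Rightarrow> 'a tree \<Rightarrow> nat" where
  "ns S Leaf = 0"
| "ns S (Node l x r) = (if x \<in> S then tc S l + ns S r else 0)"

lemma ns_le: "ns S t \<le> tc S t"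
  by (induction t) auto

lemma tc_card: "bst t \<Longrightarrow> tc S t \<le> card (S \<inter> set_tree t)"
proof (induction t)
  case (Node l x r)
  show ?case
  proof (cases "x \<in> S")
    case True
    have d: "(S \<inter> set_tree l) \<inter> (S \<inter> set_tree r) = {}" using Node.prems by fastforce
    have xn: "x \<notin> (S \<inter> set_tree l) \<union> (S \<inter> set_tree r)" using Node.prems by fastforce
    have "S \<inter> set_tree (Node l x r) = insert x ((S \<inter> set_tree l) \<union> (S \<inter> set_tree r))" using True by auto
    then have "card (S \<inter> set_tree (Node l x r)) = 1 + card (S \<inter> set_tree l) + card (S \<inter> set_tree r)"
      using d xn by (simp add: card_Un_disjoint)
    then show ?thesis using Node True by simp
  qed simp
qed simp


lemma spine: "\<exists>j. ((V,[]),(sp (flat S V),[])) \<in> bst_step ^^ j \<and> j \<le> 2 * tc S V + 2 * ns S V"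
proof (induction "tc S V + ns S V" arbitrary: V rule: less_induct)
  case less
  show ?case
  proof (cases V)
    case Leaf then show ?thesis by (intro exI[of _ 0]) simp
  next
    case (Node l x r)
    show ?thesis
    proof (cases "x \<in> S")
      case False then show ?thesis using Node by (intro exI[of _ 0]) simp
    next
      case xS: True
      show ?thesis
      proof (cases "\<exists>ll y lr. l = Node ll y lr \<and> y \<in> S")
        case True
        then obtain ll y lr where l: "l = Node ll y lr" "y \<in> S" by auto
        define V' where "V' = Node ll y (Node lr x r)"
        have m: "tc S V' + ns S V' < tc S V + ns S V" "tc S V' = tc S V" "ns S V' + 1 = ns S V"
          using Node l xS by (auto simp: V'_def)
        obtain j where j: "((V',[]),(sp (flat S V'),[])) \<in> bst_step ^^ j" "j \<le> 2 * tc S V' + 2 * ns S V'"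
          using less(1)[OF m(1)] by auto
        have fl: "flat S V' = flat S V" using Node l xS by (simp add: V'_def)
        have s1: "((V,[]),(V,[DL])) \<in> bst_step" using Node l by (simp add: step_iff)
        have s2: "((V,[DL]),(V',[])) \<in> bst_step" using Node l unfolding step_iff V'_def
          by (auto intro!: exI[of _ "[]"])
        have "((V,[]),(sp (flat S V),[])) \<in> bst_step ^^ (1 + 1 + j)"
          using relpow_trans[OF relpow_trans[OF step1[OF s1] step1[OF s2]] j(1)] fl by simp
        then show ?thesis using j(2) m by (intro exI[of _ "1+1+j"]) simp
      next
        case False
        then have fll: "flat S l = [Inl l]" by (cases l) auto
        show ?thesis
        proof (cases "\<exists>rl z rr. r = Node rl z rr \<and> z \<in> S")
          case False
          then have "flat S r = [Inl r]" by (cases r) auto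
          then show ?thesis using Node xS fll by (intro exI[of _ 0]) simp
        next
          case True
          then obtain rl z rr where r: "r = Node rl z rr" "z \<in> S" by auto
          have m: "tc S r + ns S r < tc S V + ns S V" "tc S V = 1 + tc S r" "ns S V = ns S r"
            using Node xS fll False by (cases l; auto)+
          obtain j where j: "((r,[]),(sp (flat S r),[])) \<in> bst_step ^^ j" "j \<le> 2 * tc S r + 2 * ns S r"
            using less(1)[OF m(1)] by auto
          have j': "((V,[DR]),(Node l x (sp (flat S r)),[DR])) \<in> bst_step ^^ j"
            using steps_liftR[OF j(1), of l x] Node by simp
          have s1: "((V,[]),(V,[DR])) \<in> bst_step" using Node r by (simp add: step_iff)
          have ne: "sp (flat S r) \<noteq> Leaf" using r sp_app_ne[OF alt_flat] by simp
          have s2: "((Node l x (sp (flat S r)),[DR]),(Node l x (sp (flat S r)),[])) \<in> bst_step"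
            using ne by (simp add: step_iff)
          have fV: "sp (flat S V) = Node l x (sp (flat S r))" using Node xS fll by simp
          have "((V,[]),(sp (flat S V),[])) \<in> bst_step ^^ (1 + j + 1)"
            using relpow_trans[OF relpow_trans[OF step1[OF s1] j'] step1[OF s2]] fV by simp
          then show ?thesis using j(2) m by (intro exI[of _ "1+j+1"]) simp
        qed
      qed
    qed
  qed
qed

lemma distance:
  assumes "bst U" "bst V" "flat S U = flat S V" "finite S"
  shows "\<exists>j\<le>16 * card S. ((U,[]),(V,[])) \<in> bst_step ^^ j"
proof -
  have cU: "tc S U \<le> card S" using tc_card[OF assms(1), of S] card_mono[OF assms(4), of "S \<inter> set_tree U"] by auto
  have cV: "tc S V \<le> card S" using tc_card[OF assms(2), of S] card_mono[OF assms(4), of "S \<inter> set_tree V"] by auto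
  obtain j1 where j1: "((U,[]),(sp (flat S U),[])) \<in> bst_step ^^ j1" "j1 \<le> 2 * tc S U + 2 * ns S U"
    using spine by blast
  obtain j2 where j2: "((V,[]),(sp (flat S V),[])) \<in> bst_step ^^ j2" "j2 \<le> 2 * tc S V + 2 * ns S V"
    using spine by blast
  obtain i where i: "i \<le> 3 * j2" "((sp (flat S V),[]),(V,[])) \<in> bst_step ^^ i" using steps_rev[OF j2(1)] by auto
  have "((U,[]),(V,[])) \<in> bst_step ^^ (j1 + i)" using relpow_trans[OF j1(1)] i(2) assms(3) by simp
  moreover have "j1 + i \<le> 16 * card S" using j1(2) j2(2) i(1) cU cV ns_le[of S U] ns_le[of S V] by linarith
  ultimately show ?thesis by blast
qed


section \<open>Prefix trees and the extension construction\<close>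

fun istop :: "'a tree \<Rightarrow> 'a tree \<Rightarrow> bool" where
  "istop Leaf u = True"
| "istop (Node l x r) Leaf = False"
| "istop (Node l x r) (Node l' y r') = (x = y \<and> istop l l' \<and> istop r r')"

lemma istop_refl: "istop t t"
  by (induction t) auto

lemma istop_trans: "istop a b \<Longrightarrow> istop b c \<Longrightarrow> istop a c"
proof (induction a b arbitrary: c rule: istop.induct)
  case (3 l x r l' y r')
  then show ?case by (cases c) auto
qed auto

lemma istop_set: "istop a b \<Longrightarrow> set_tree a \<subseteq> set_tree b"
  by (induction a b rule: istop.induct) auto

fun R :: "'a item \<Rightarrow> 'a item \<Rightarrow> bool" where
  "R (Inl h) (Inl h') = istop h h'"
| "R (Inr x) (Inr y) = (x = y)"
| "R _ _ = False"

lemma flat_rel: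
  "istop T U \<Longrightarrow> bst U \<Longrightarrow> S \<inter> set_tree U \<subseteq> set_tree T \<Longrightarrow> list_all2 R (flat S T) (flat S U)"
proof (induction T U rule: istop.induct)
  case (1 u)
  then have "flat S u = [Inl u]" by (cases u) auto
  then show ?case by simp
next
  case (3 l x r l' y r')
  then have xy: "x = y" by simp
  show ?case
  proof (cases "x \<in> S")
    case True
    have sl: "set_tree l \<subseteq> set_tree l'" "set_tree r \<subseteq> set_tree r'" using 3 istop_set by auto
    have "S \<inter> set_tree l' \<subseteq> set_tree l"
    proof
      fix z assume z: "z \<in> S \<inter> set_tree l'"
      then have "z < x" using 3 xy by auto
      moreover have "z \<in> set_tree l \<or> z = x \<or> z \<in> set_tree r" using 3(5) z xy by auto
      moreover have "\<forall>w\<in>set_tree r. x < w" using 3(4) sl xy by auto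
      ultimately show "z \<in> set_tree l" by auto
    qed
    moreover have "S \<inter> set_tree r' \<subseteq> set_tree r"
    proof
      fix z assume z: "z \<in> S \<inter> set_tree r'"
      then have "x < z" using 3 xy by auto
      moreover have "z \<in> set_tree l \<or> z = x \<or> z \<in> set_tree r" using 3(5) z xy by auto
      moreover have "\<forall>w\<in>set_tree l. w < x" using 3(4) sl xy by auto
      ultimately show "z \<in> set_tree r" by auto
    qed
    ultimately show ?thesis using 3 True xy by (auto intro!: list_all2_appendI)
  next
    case False
    then show ?thesis using 3 by simp
  qed
qed auto

inductive good :: "'a set \<Rightarrow> 'a tree \<Rightarrow> 'a item list \<Rightarrow> bool" for S where
  g_leaf: "alt L \<Longrightarrow> (\<forall>h. Inl h \<in> set L \<longrightarrow> rootok S h) \<Longrightarrow> (\<forall>y. Inr y \<in> set L \<longrightarrow> y \<in> S) \<Longrightarrow> good S Leaf L"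
| g_in: "x \<in> S \<Longrightarrow> good S l L1 \<Longrightarrow> good S r L2 \<Longrightarrow> Inr x \<notin> set L1 \<Longrightarrow> good S (Node l x r) (L1 @ Inr x # L2)"
| g_out: "x \<notin> S \<Longrightarrow> istop (Node l x r) h \<Longrightarrow> good S (Node l x r) [Inl h]"

fun ext :: "'a set \<Rightarrow> 'a tree \<Rightarrow> 'a item list \<Rightarrow> 'a tree" where
  "ext S Leaf L = sp L"
| "ext S (Node l x r) L = (if x \<in> S then
      Node (ext S l (takeWhile (\<lambda>i. i \<noteq> Inr x) L)) x (ext S r (tl (dropWhile (\<lambda>i. i \<noteq> Inr x) L)))
    else (case L of [Inl h] \<Rightarrow> h | _ \<Rightarrow> Leaf))"

lemma good_ext: "good S P L \<Longrightarrow> flat S (ext S P L) = L \<and> istop P (ext S P L)"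
proof (induction rule: good.induct)
  case (g_leaf L)
  then show ?case using flat_sp by auto
next
  case (g_in x l L1 r L2)
  have tw: "takeWhile (\<lambda>i. i \<noteq> Inr x) (L1 @ Inr x # L2) = L1"
    using g_in(4) by (subst takeWhile_append2) auto
  have dw: "tl (dropWhile (\<lambda>i. i \<noteq> Inr x) (L1 @ Inr x # L2)) = L2"
    using g_in(4) by (subst dropWhile_append2) auto
  show ?case using g_in tw dw by simp
next
  case (g_out x l r h)
  then obtain l' r' where h: "h = Node l' x r'" by (cases h) auto
  then show ?case using g_out by simp
qed

lemma list_all2_R_Inr: "list_all2 R L L' \<Longrightarrow> Inr y \<in> set L' \<Longrightarrow> Inr y \<in> set L"
proof (induction L L' rule: list_all2_induct)
  case (Cons a b L L')
  then show ?case by (cases a; cases b) auto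
qed simp

lemma list_all2_R_alt: "alt L \<Longrightarrow> list_all2 R L L' \<Longrightarrow> alt L'"
proof (induction L arbitrary: L' rule: alt.induct)
  case (1 h)
  then obtain b where "L' = [b]" "R (Inl h) b" by (auto simp: list_all2_Cons1)
  then show ?case by (cases b) auto
next
  case (2 h x rest)
  then obtain b1 b2 L2 where b: "L' = b1 # b2 # L2" "R (Inl h) b1" "R (Inr x) b2" "list_all2 R rest L2"
    by (auto simp: list_all2_Cons1)
  have "alt L2" using 2(1) 2(2) b(4) by simp
  moreover obtain h' where "b1 = Inl h'" using b(2) by (cases b1) auto
  moreover have "b2 = Inr x" using b(3) by (cases b2) auto
  ultimately show ?case using b(1) by simp
qed auto

lemma good_transfer:
  "good S P L \<Longrightarrow> list_all2 R L L' \<Longrightarrow> (\<forall>h. Inl h \<in> set L' \<longrightarrow> rootok S h) \<Longrightarrow> good S P L'"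
proof (induction arbitrary: L' rule: good.induct)
  case (g_leaf L)
  show ?case
  proof (rule good.g_leaf)
    show "alt L'" using list_all2_R_alt[OF g_leaf(1) g_leaf(4)] .
    show "\<forall>y. Inr y \<in> set L' \<longrightarrow> y \<in> S" using list_all2_R_Inr[OF g_leaf(4)] g_leaf(3) by blast
    show "\<forall>h. Inl h \<in> set L' \<longrightarrow> rootok S h" using g_leaf(5) .
  qed
next
  case (g_in x l L1 r L2)
  from g_in.prems(1) obtain L1' M where a: "L' = L1' @ M" "list_all2 R L1 L1'" "list_all2 R (Inr x # L2) M"
    unfolding list_all2_append1 by blast
  obtain b L2' where b1: "M = b # L2'" using a(3) by (cases M) auto
  have b: "R (Inr x) b" "list_all2 R L2 L2'" using a(3) b1 by auto
  then have bx: "b = Inr x" by (cases b) auto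
  have ro: "\<forall>h. Inl h \<in> set L1' \<longrightarrow> rootok S h" "\<forall>h. Inl h \<in> set L2' \<longrightarrow> rootok S h"
    using g_in.prems(2) unfolding a(1) b1 by auto
  have n: "Inr x \<notin> set L1'" using list_all2_R_Inr[OF a(2)] g_in(4) by blast
  have gl: "good S l L1'" using g_in.IH(1)[OF a(2) ro(1)] .
  have gr: "good S r L2'" using g_in.IH(2)[OF b(2) ro(2)] .
  have "good S (Node l x r) (L1' @ Inr x # L2')" using good.g_in[OF g_in(1) gl gr n] .
  then show ?case using a(1) b1 bx by simp
next
  case (g_out x l r h)
  then obtain b where b: "L' = [b]" "R (Inl h) b" by (auto simp: list_all2_Cons1)
  then obtain h' where h': "L' = [Inl h']" "istop h h'" by (cases b) auto
  have "istop (Node l x r) h'" using istop_trans[OF g_out(2) h'(2)] .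
  then show ?case using good.g_out[OF g_out(1)] h'(1) by simp
qed




section \<open>Combinatorics of the merge\<close>

lemma subtrees_set: "s \<in> subtrees t \<Longrightarrow> set_tree s \<subseteq> set_tree t"
  by (induction t) auto

lemma subtrees_trans: "s \<in> subtrees t \<Longrightarrow> u \<in> subtrees s \<Longrightarrow> u \<in> subtrees t"
  by (induction t) auto

lemma subtrees_bst: "s \<in> subtrees t \<Longrightarrow> bst t \<Longrightarrow> bst s"
  by (induction t) auto

lemma subtrees_size: "s \<in> subtrees t \<Longrightarrow> s \<noteq> t \<Longrightarrow> size s < size t"
proof (induction t)
  case (Node l y r)
  then show ?case using size_subtrees[of s l] size_subtrees[of s r] by auto
qed simp

lemma hanging_sub: "h \<in> hanging S t \<Longrightarrow> h \<in> subtrees t \<and> h \<noteq> Leaf"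
  by (induction t) (auto split: if_splits)

lemma hanging_root: "h \<in> hanging S t \<Longrightarrow> \<exists>l x r. h = Node l x r \<and> x \<notin> S"
  by (induction t) (auto split: if_splits)

lemma set_hanging: "set_tree t \<subseteq> S \<union> \<Union>(set_tree ` hanging S t)"
  by (induction t) auto

lemma hanging_disj: "top_tree t (S \<inter> set_tree t) \<Longrightarrow> P \<in> hanging S t \<Longrightarrow> set_tree P \<inter> S = {}"
proof (induction t)
  case (Node l y r)
  have yS: "y \<in> S" using Node.prems(1) by simp
  have e1: "S \<inter> set_tree (Node l y r) \<inter> set_tree l = S \<inter> set_tree l" by auto
  have e2: "S \<inter> set_tree (Node l y r) \<inter> set_tree r = S \<inter> set_tree r" by auto
  have tl: "(S \<inter> set_tree l = {} \<or> top_tree l (S \<inter> set_tree l)) \<and> (S \<inter> set_tree r = {} \<or> top_tree r (S \<inter> set_tree r))"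
    using Node.prems(1) unfolding top_tree.simps e1 e2 by blast
  have "P \<in> hanging S l \<or> P \<in> hanging S r" using Node.prems(2) yS by simp
  then show ?case
  proof
    assume P: "P \<in> hanging S l"
    show ?thesis
    proof (cases "S \<inter> set_tree l = {}")
      case True
      then show ?thesis using hanging_sub[OF P] subtrees_set by blast
    next
      case False
      then show ?thesis using Node.IH(1) P tl by blast
    qed
  next
    assume P: "P \<in> hanging S r"
    show ?thesis
    proof (cases "S \<inter> set_tree r = {}")
      case True
      then show ?thesis using hanging_sub[OF P] subtrees_set by blast
    next
      case False
      then show ?thesis using Node.IH(2) P tl by blast
    qed
  qed
qed simp

lemma subtree_nested: "bst t \<Longrightarrow> s \<in> subtrees t \<Longrightarrow> Node l x r \<in> subtrees t \<Longrightarrow> x \<in> set_tree s \<Longrightarrow> Node l x r \<in> subtrees s"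
proof (induction t arbitrary: s)
  case (Node tl y tr)
  show ?case
  proof (cases "s = Node tl y tr")
    case True then show ?thesis using Node by simp
  next
    case False
    then have "s \<in> subtrees tl \<or> s \<in> subtrees tr" using Node.prems by simp
    then show ?thesis
    proof
      assume s: "s \<in> subtrees tl"
      then have xl: "x \<in> set_tree tl" using Node.prems subtrees_set by blast
      have "x \<noteq> y" using xl Node.prems(1) by auto
      moreover have "Node l x r \<notin> subtrees tr" using xl Node.prems(1) in_set_tree_if by fastforce
      ultimately have "Node l x r \<in> subtrees tl" using Node.prems(3) by auto
      then show ?thesis using Node.IH(1) s Node.prems by simp
    next
      assume s: "s \<in> subtrees tr"
      then have xl: "x \<in> set_tree tr" using Node.prems subtrees_set by blast
      have "x \<noteq> y" using xl Node.prems(1) by auto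
      moreover have "Node l x r \<notin> subtrees tl" using xl Node.prems(1) in_set_tree_if by fastforce
      ultimately have "Node l x r \<in> subtrees tr" using Node.prems(3) by auto
      then show ?thesis using Node.IH(2) s Node.prems by simp
    qed
  qed
qed simp

lemma hanging_above: "P \<in> hanging S t \<Longrightarrow> s \<in> subtrees t \<Longrightarrow> P \<in> subtrees s \<Longrightarrow> P \<noteq> s \<Longrightarrow> bst t
   \<Longrightarrow> \<exists>y\<in>set_tree s. y \<in> S"
proof (induction t arbitrary: s)
  case (Node l y r)
  show ?case
  proof (cases "y \<in> S")
    case False
    then have "P = Node l y r" using Node.prems by simp
    then show ?thesis using Node.prems subtrees_size size_subtrees by fastforce
  next
    case yS: True
    show ?thesis
    proof (cases "s = Node l y r")
      case True then show ?thesis using yS by auto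
    next
      case False
      then have s: "s \<in> subtrees l \<or> s \<in> subtrees r" using Node.prems by simp
      have Ph: "P \<in> hanging S l \<or> P \<in> hanging S r" using Node.prems yS by simp
      obtain pl px pr where Pn: "P = Node pl px pr" using hanging_root[OF Node.prems(1)] by auto
      have pxs: "px \<in> set_tree s" using Node.prems(3) Pn in_set_tree_if by fastforce
      show ?thesis
      proof (cases "s \<in> subtrees l")
        case True
        have "P \<in> hanging S l"
        proof (rule ccontr)
          assume "P \<notin> hanging S l"
          then have "P \<in> subtrees r" using Ph hanging_sub by blast
          then have "px \<in> set_tree r" using Pn in_set_tree_if by fastforce
          moreover have "px \<in> set_tree l" using pxs True subtrees_set by blast
          ultimately show False using Node.prems(5) by fastforce
        qed
        then show ?thesis using Node.IH(1) True Node.prems by simp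
      next
        case False
        then have sr: "s \<in> subtrees r" using s by simp
        have "P \<in> hanging S r"
        proof (rule ccontr)
          assume "P \<notin> hanging S r"
          then have "P \<in> subtrees l" using Ph hanging_sub by blast
          then have "px \<in> set_tree l" using Pn in_set_tree_if by fastforce
          moreover have "px \<in> set_tree r" using pxs sr subtrees_set by blast
          ultimately show False using Node.prems(5) by fastforce
        qed
        then show ?thesis using Node.IH(2) sr Node.prems by simp
      qed
    qed
  qed
qed simp

lemma block_lemma:
  fixes A B I SP \<tau> :: "'a::linorder set"
  assumes fA: "finite A" and dAB: "A \<inter> B = {}"
    and cv: "\<forall>a c y. a \<in> I \<longrightarrow> c \<in> I \<longrightarrow> a < y \<longrightarrow> y < c \<longrightarrow> y \<in> I"
    and SP: "A \<inter> I = SP" "SP \<noteq> {}" "SP \<inter> \<tau> = {}"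
    and bb: "block_boundaries A B \<subseteq> \<tau>" and b: "b \<in> B" "b \<in> I"
  shows False
proof (cases "\<exists>a\<in>SP. a < b")
  case True
  define p where "p = Max {a\<in>SP. a < b}"
  have fin: "finite {a\<in>SP. a < b}" using fA SP(1) by auto
  have p: "p \<in> SP" "p < b" using Max_in[OF fin] True unfolding p_def by auto
  have pmax: "a \<in> SP \<Longrightarrow> a < b \<Longrightarrow> a \<le> p" for a using Max_ge[OF fin] unfolding p_def by auto
  have pI: "p \<in> I" "p \<in> A" using p SP(1) by auto
  have "block_last A B p"
    unfolding block_last_def
  proof (intro disjI1 conjI notI)
    show "p \<in> A" using pI by simp
    assume "\<exists>y\<in>A. p < y \<and> {p<..<y} \<inter> B = {}"
    then obtain y where y: "y \<in> A" "p < y" "{p<..<y} \<inter> B = {}" by auto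
    show False
    proof (cases "y < b")
      case True
      then have "y \<in> I" using cv pI b p y by blast
      then have "y \<in> SP" using y SP(1) by auto
      then show False using pmax True y by fastforce
    next
      case False
      then have "b < y" using dAB b y by (cases "b = y") auto
      then show False using y p b by auto
    qed
  qed
  then have "p \<in> \<tau>" using bb unfolding block_boundaries_def by auto
  then show False using p SP(3) by auto
next
  case False
  define p where "p = Min SP"
  have fin: "finite SP" using fA SP(1) by auto
  have p: "p \<in> SP" using Min_in[OF fin SP(2)] unfolding p_def .
  have pmin: "a \<in> SP \<Longrightarrow> p \<le> a" for a using Min_le[OF fin] unfolding p_def by auto
  have "\<not> p < b" using False p by auto
  moreover have "b \<noteq> p" using p SP(1) dAB b by auto
  ultimately have pb: "b < p" by auto
  have pI: "p \<in> I" "p \<in> A" using p SP(1) by auto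
  have "block_first A B p"
    unfolding block_first_def
  proof (intro disjI1 conjI notI)
    show "p \<in> A" using pI by simp
    assume "\<exists>y\<in>A. y < p \<and> {y<..<p} \<inter> B = {}"
    then obtain y where y: "y \<in> A" "y < p" "{y<..<p} \<inter> B = {}" by auto
    show False
    proof (cases "b < y")
      case True
      then have "y \<in> I" using cv pI b y by blast
      then have "y \<in> SP" using y SP(1) by auto
      then show False using pmin y by fastforce
    next
      case False
      then have "y < b" using dAB b y by (cases "b = y") auto
      then show False using y pb b by auto
    qed
  qed
  then have "p \<in> \<tau>" using bb unfolding block_boundaries_def by auto
  then show False using p SP(3) by auto
qed


lemma self_sub: "t \<in> subtrees t" by (cases t) auto

lemma merge_hanging:
  assumes bA: "bst TA" and tT: "top_tree T \<tau>"
    and dis: "set_tree TA \<inter> set_tree TB = {}"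
    and hg: "\<forall>s\<in>hanging \<tau> T. s \<in> subtrees TA \<or> s \<in> subtrees TB"
    and sT: "set_tree T = set_tree TA \<union> set_tree TB"
    and P: "P \<in> hanging \<tau> TA"
  shows "P \<in> hanging \<tau> T"
proof -
  obtain l x r where Pn: "P = Node l x r" "x \<notin> \<tau>" using hanging_root[OF P] by auto
  have PA: "P \<in> subtrees TA" using hanging_sub[OF P] by simp
  have xA: "x \<in> set_tree TA" using PA Pn in_set_tree_if by fastforce
  then have "x \<in> set_tree T" using sT by auto
  then obtain s where s: "s \<in> hanging \<tau> T" "x \<in> set_tree s" using set_hanging[of T \<tau>] Pn(2) by blast
  have tT': "top_tree T (\<tau> \<inter> set_tree T)" using tT
    by (metis inf.absorb_iff1 top_tree.elims(2))
  have sd: "set_tree s \<inter> \<tau> = {}" using hanging_disj[OF tT' s(1)] .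
  have "s \<in> subtrees TA"
  proof (rule ccontr)
    assume "s \<notin> subtrees TA"
    then have "s \<in> subtrees TB" using hg s(1) by blast
    then have "x \<in> set_tree TB" using s(2) subtrees_set by blast
    then show False using xA dis by blast
  qed
  then have "P \<in> subtrees s" using subtree_nested[OF bA _ _ s(2)] PA Pn by blast
  moreover have "P = s"
  proof (rule ccontr)
    assume "P \<noteq> s"
    then obtain y where "y \<in> set_tree s" "y \<in> \<tau>"
      using hanging_above[OF P \<open>s \<in> subtrees TA\<close> \<open>P \<in> subtrees s\<close> _ bA] by blast
    then show False using sd by blast
  qed
  ultimately show ?thesis using s(1) by simp
qed

lemma ball_imp3: "\<forall>x\<in>A. P x \<and> Q x \<longrightarrow> Z x \<Longrightarrow> x \<in> A \<Longrightarrow> P x \<Longrightarrow> Q x \<Longrightarrow> Z x"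
  by blast

lemma conv_lt: "\<forall>a c y. a \<in> I \<longrightarrow> c \<in> I \<longrightarrow> a < y \<longrightarrow> y < c \<longrightarrow> y \<in> I \<Longrightarrow>
  \<forall>a c y. a \<in> I \<inter> {y. y < (x::'a::linorder)} \<longrightarrow> c \<in> I \<inter> {y. y < x} \<longrightarrow> a < y \<longrightarrow> y < c \<longrightarrow> y \<in> I \<inter> {y. y < x}"
  by (metis (mono_tags, lifting) IntE IntI mem_Collect_eq order.strict_trans)

lemma conv_gt: "\<forall>a c y. a \<in> I \<longrightarrow> c \<in> I \<longrightarrow> a < y \<longrightarrow> y < c \<longrightarrow> y \<in> I \<Longrightarrow>
  \<forall>a c y. a \<in> I \<inter> {y. (x::'a::linorder) < y} \<longrightarrow> c \<in> I \<inter> {y. x < y} \<longrightarrow> a < y \<longrightarrow> y < c \<longrightarrow> y \<in> I \<inter> {y. x < y}"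
  by (metis (mono_tags, lifting) IntE IntI mem_Collect_eq order.strict_trans)

lemma merge_good_ind:
  fixes TA TB T :: "'a::linorder tree"
  assumes bA: "bst TA" and bT: "bst T"
    and tA: "top_tree TA (\<tau> \<inter> set_tree TA)" and tT: "top_tree T \<tau>"
    and dis: "set_tree TA \<inter> set_tree TB = {}"
    and tau: "\<tau> \<subseteq> set_tree TA \<union> set_tree TB"
    and hg: "\<forall>s\<in>hanging \<tau> T. s \<in> subtrees TA \<or> s \<in> subtrees TB"
    and bb: "block_boundaries (set_tree TA) (set_tree TB) \<subseteq> \<tau>"
    and sT: "set_tree T = set_tree TA \<union> set_tree TB"
  shows "P \<in> subtrees TA \<Longrightarrow> hanging \<tau> P \<subseteq> hanging \<tau> TA
    \<Longrightarrow> (\<forall>a c y. a \<in> I \<longrightarrow> c \<in> I \<longrightarrow> a < y \<longrightarrow> y < c \<longrightarrow> y \<in> I)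
    \<Longrightarrow> set_tree TA \<inter> I = set_tree P
    \<Longrightarrow> alt L \<Longrightarrow> sorted_wrt lt_item L
    \<Longrightarrow> (\<forall>it\<in>set L. keys it \<subseteq> I)
    \<Longrightarrow> (\<forall>it\<in>set (flat \<tau> T). keys it \<noteq> {} \<and> keys it \<subseteq> I \<longrightarrow> it \<in> set L)
    \<Longrightarrow> set L \<subseteq> set (flat \<tau> T)
    \<Longrightarrow> good \<tau> P L"
proof (induction P arbitrary: I L)
  case Leaf
  show ?case
  proof (rule g_leaf)
    show "alt L" using Leaf(5) .
    show "\<forall>h. Inl h \<in> set L \<longrightarrow> rootok \<tau> h" using Leaf(9) flat_Inl_rootok by blast
    show "\<forall>y. Inr y \<in> set L \<longrightarrow> y \<in> \<tau>"
    proof (intro allI impI)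
      fix y assume "Inr y \<in> set L"
      then have "Inr y \<in> set (flat \<tau> T)" using Leaf(9) by blast
      then show "y \<in> \<tau>" by (rule flat_Inr)
    qed
  qed
next
  case (Node l x r)
  have bP: "bst (Node l x r)" using subtrees_bst[OF Node.prems(1) bA] .
  have "x \<in> set_tree TA \<inter> I" unfolding Node.prems(4) by simp
  then have xI: "x \<in> I" by blast
  show ?case
  proof (cases "x \<in> \<tau>")
    case True
    have "Inr x \<in> set (flat \<tau> T)" using top_tree_flat[OF tT _ True] by simp
    then have "Inr x \<in> set L" using ball_imp3[OF Node.prems(8)] xI by simp
    then obtain L1 L2 where L: "L = L1 @ Inr x # L2" "Inr x \<notin> set L1"
      using split_list_first[of "Inr x" L] by blast
    have alt12: "alt L1" "alt L2" using alt_split[of L1 x L2] Node.prems(5) unfolding L(1) by auto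
    have srt: "sorted_wrt lt_item L1" "sorted_wrt lt_item L2"
      "\<forall>it\<in>set L1. lt_item it (Inr x)" "\<forall>it\<in>set L2. lt_item (Inr x) it"
      using Node.prems(6) unfolding L(1) by (auto simp: sorted_wrt_append)
    have k1: "\<forall>it\<in>set L1. \<forall>u\<in>keys it. u < x" using srt(3) by (auto simp: lt_item_def)
    have k2: "\<forall>it\<in>set L2. \<forall>u\<in>keys it. x < u" using srt(4) by (auto simp: lt_item_def)
    have "l \<in> subtrees (Node l x r)" "r \<in> subtrees (Node l x r)" using self_sub[of l] self_sub[of r] by auto
    then have sub: "l \<in> subtrees TA" "r \<in> subtrees TA"
      using subtrees_trans[OF Node.prems(1)] by auto
    have hang: "hanging \<tau> l \<subseteq> hanging \<tau> TA" "hanging \<tau> r \<subseteq> hanging \<tau> TA"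
      using Node.prems(2) True by auto
    have bl: "\<forall>y\<in>set_tree l. y < x" "\<forall>y\<in>set_tree r. x < y" using bP by simp_all
    have "set_tree TA \<inter> (I \<inter> {y. y < x}) = (set_tree TA \<inter> I) \<inter> {y. y < x}" by blast
    also have "\<dots> = set_tree (Node l x r) \<inter> {y. y < x}" using Node.prems(4) by simp
    also have "\<dots> = set_tree l" using bl by auto
    finally have setl: "set_tree TA \<inter> (I \<inter> {y. y < x}) = set_tree l" .
    have "set_tree TA \<inter> (I \<inter> {y. x < y}) = (set_tree TA \<inter> I) \<inter> {y. x < y}" by blast
    also have "\<dots> = set_tree (Node l x r) \<inter> {y. x < y}" using Node.prems(4) by simp
    also have "\<dots> = set_tree r" using bl by auto
    finally have setr: "set_tree TA \<inter> (I \<inter> {y. x < y}) = set_tree r" .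
    have gl: "good \<tau> l L1"
    proof (rule Node.IH(1)[OF sub(1) hang(1) _ setl alt12(1) srt(1)])
      show "\<forall>a c y. a \<in> I \<inter> {y. y < x} \<longrightarrow> c \<in> I \<inter> {y. y < x} \<longrightarrow> a < y \<longrightarrow> y < c \<longrightarrow> y \<in> I \<inter> {y. y < x}"
        using conv_lt[OF Node.prems(3)] .
      show "\<forall>it\<in>set L1. keys it \<subseteq> I \<inter> {y. y < x}"
      proof (intro ballI subsetI)
        fix it u assume a: "it \<in> set L1" "u \<in> keys it"
        then have "it \<in> set L" using L(1) by simp
        then have "u \<in> I" using Node.prems(7) a(2) by blast
        moreover have "u < x" using k1 a by blast
        ultimately show "u \<in> I \<inter> {y. y < x}" by simp
      qed
      show "\<forall>it\<in>set (flat \<tau> T). keys it \<noteq> {} \<and> keys it \<subseteq> I \<inter> {y. y < x} \<longrightarrow> it \<in> set L1"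
      proof (intro ballI impI)
        fix it assume it: "it \<in> set (flat \<tau> T)" "keys it \<noteq> {} \<and> keys it \<subseteq> I \<inter> {y. y < x}"
        obtain u where u: "u \<in> keys it" using it(2) by blast
        have ki: "keys it \<subseteq> I" using it(2) by blast
        have "it \<in> set L" using ball_imp3[OF Node.prems(8) it(1)] it(2) ki by blast
        moreover have "it \<noteq> Inr x" using it(2) by auto
        moreover have "it \<notin> set L2"
        proof
          assume "it \<in> set L2"
          then have "x < u" using k2 u by blast
          moreover have "u < x" using u it(2) by blast
          ultimately show False by simp
        qed
        ultimately show "it \<in> set L1" using L(1) by auto
      qed
      show "set L1 \<subseteq> set (flat \<tau> T)" using Node.prems(9) L(1) by auto
    qed
    have gr: "good \<tau> r L2"
    proof (rule Node.IH(2)[OF sub(2) hang(2) _ setr alt12(2) srt(2)])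
      show "\<forall>a c y. a \<in> I \<inter> {y. x < y} \<longrightarrow> c \<in> I \<inter> {y. x < y} \<longrightarrow> a < y \<longrightarrow> y < c \<longrightarrow> y \<in> I \<inter> {y. x < y}"
        using conv_gt[OF Node.prems(3)] .
      show "\<forall>it\<in>set L2. keys it \<subseteq> I \<inter> {y. x < y}"
      proof (intro ballI subsetI)
        fix it u assume a: "it \<in> set L2" "u \<in> keys it"
        then have "it \<in> set L" using L(1) by simp
        then have "u \<in> I" using Node.prems(7) a(2) by blast
        moreover have "x < u" using k2 a by blast
        ultimately show "u \<in> I \<inter> {y. x < y}" by simp
      qed
      show "\<forall>it\<in>set (flat \<tau> T). keys it \<noteq> {} \<and> keys it \<subseteq> I \<inter> {y. x < y} \<longrightarrow> it \<in> set L2"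
      proof (intro ballI impI)
        fix it assume it: "it \<in> set (flat \<tau> T)" "keys it \<noteq> {} \<and> keys it \<subseteq> I \<inter> {y. x < y}"
        obtain u where u: "u \<in> keys it" using it(2) by blast
        have ki: "keys it \<subseteq> I" using it(2) by blast
        have "it \<in> set L" using ball_imp3[OF Node.prems(8) it(1)] it(2) ki by blast
        moreover have "it \<noteq> Inr x" using it(2) by auto
        moreover have "it \<notin> set L1"
        proof
          assume "it \<in> set L1"
          then have "u < x" using k1 u by blast
          moreover have "x < u" using u it(2) by blast
          ultimately show False by simp
        qed
        ultimately show "it \<in> set L2" using L(1) by auto
      qed
      show "set L2 \<subseteq> set (flat \<tau> T)" using Node.prems(9) L(1) by auto
    qed
    show ?thesis using g_in[OF True gl gr L(2)] L(1) by simp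
  next
    case False
    have Ph: "Node l x r \<in> hanging \<tau> TA" using Node.prems(2) False by simp
    have PT: "Node l x r \<in> hanging \<tau> T" using merge_hanging[OF bA tT dis hg sT Ph] .
    have "Inl (Node l x r) \<in> set (flat \<tau> T)" using flat_hanging[OF PT] .
    moreover have "keys (Inl (Node l x r)) \<noteq> {}" by simp
    moreover have "keys (Inl (Node l x r)) \<subseteq> I" using Node.prems(4) by (metis Int_lower2 keys.simps(1))
    ultimately have inL: "Inl (Node l x r) \<in> set L" using ball_imp3[OF Node.prems(8)] by blast
    have Pd: "set_tree (Node l x r) \<inter> \<tau> = {}" using hanging_disj[OF tA Ph] .
    have noR: "\<forall>y. Inr y \<notin> set L"
    proof (intro allI notI)
      fix y assume y: "Inr y \<in> set L"
      then have "Inr y \<in> set (flat \<tau> T)" using Node.prems(9) by blast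
      then have yt: "y \<in> \<tau>" by (rule flat_Inr)
      have "keys (Inr y) \<subseteq> I" using Node.prems(7) y by blast
      then have yI: "y \<in> I" by simp
      show False
      proof (cases "y \<in> set_tree TA")
        case True
        then have "y \<in> set_tree (Node l x r)" using yI Node.prems(4) by blast
        then show False using Pd yt by blast
      next
        case False
        then have yB: "y \<in> set_tree TB" using yt tau by blast
        show False
        proof (rule block_lemma[OF _ dis Node.prems(3) Node.prems(4) _ Pd bb yB yI])
          show "finite (set_tree TA)" by simp
          show "set_tree (Node l x r) \<noteq> {}" by simp
        qed
      qed
    qed
    obtain z where "L = [Inl z]" using alt_noInr[OF Node.prems(5) noR] by blast
    then have "L = [Inl (Node l x r)]" using inL by simp
    then show ?thesis using g_out[OF False istop_refl] by simp
  qed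
qed

lemma merge_good:
  fixes TA TB T :: "'a::linorder tree"
  assumes bA: "bst TA" and bT: "bst T"
    and tA: "top_tree TA (\<tau> \<inter> set_tree TA)" and tT: "top_tree T \<tau>"
    and dis: "set_tree TA \<inter> set_tree TB = {}"
    and tau: "\<tau> \<subseteq> set_tree TA \<union> set_tree TB"
    and hg: "\<forall>s\<in>hanging \<tau> T. s \<in> subtrees TA \<or> s \<in> subtrees TB"
    and bb: "block_boundaries (set_tree TA) (set_tree TB) \<subseteq> \<tau>"
    and sT: "set_tree T = set_tree TA \<union> set_tree TB"
  shows "good \<tau> TA (flat \<tau> T)"
  using merge_good_ind[OF assms, of TA UNIV "flat \<tau> T"]
  by (simp add: alt_flat flat_sorted[OF bT] self_sub)


section \<open>Serving and the main induction\<close>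

definition Cont :: "'a tree \<Rightarrow> 'a list \<Rightarrow> nat \<Rightarrow> bool" where
  "Cont t ks m \<longleftrightarrow> (\<exists>m0\<le>m. serve t ks m0)"

lemma cont_mono: "Cont t ks m \<Longrightarrow> m \<le> m' \<Longrightarrow> Cont t ks m'"
  unfolding Cont_def by (meson le_trans)

lemma cont_prepend:
  assumes j: "((t,[]),(t',[])) \<in> bst_step ^^ j" and c: "Cont t' ks m"
  shows "Cont t ks (j + m)"
proof (cases ks)
  case Nil
  then show ?thesis unfolding Cont_def by (intro exI[of _ 0]) simp
next
  case (Cons k ks')
  from c obtain m0 where m0: "m0 \<le> m" "serve t' (k # ks') m0" unfolding Cont_def Cons by auto
  then obtain t'' m1 m2 where s: "search t' k t'' m1" "serve t'' ks' m2" "m0 = m1 + m2" by auto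
  from s(1) obtain c q n1 n2 where n: "((t', []), c) \<in> bst_step ^^ n1" "value_at (fst c) (snd c) = Some k"
    "(c, (t'', q)) \<in> bst_step ^^ n2" "m1 = n1 + n2" unfolding search_def by blast
  have "((t, []), c) \<in> bst_step ^^ (j + n1)" using relpow_trans[OF j n(1)] .
  then have "search t k t'' (j + m1)" unfolding search_def using n by (intro exI[of _ c] exI[of _ q] exI[of _ "j+n1"] exI[of _ n2]) auto
  then have "serve t (k # ks') ((j + m1) + m2)" using s(2) by (simp only: serve.simps) blast
  then have "serve t (k # ks') (j + m0)" using s(3) by (simp add: add.assoc)
  then show ?thesis unfolding Cont_def Cons using m0 by (intro exI[of _ "j+m0"]) auto
qed

lemma cont_base: "Cont (Node l x r) ks m \<Longrightarrow> Cont (Node l x r) (x # ks) m"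
proof -
  assume "Cont (Node l x r) ks m"
  then obtain m0 where m0: "m0 \<le> m" "serve (Node l x r) ks m0" unfolding Cont_def by auto
  have "search (Node l x r) x (Node l x r) 0" unfolding search_def
    by (intro exI[of _ "(Node l x r, [])"] exI[of _ "[]"] exI[of _ 0]) (simp add: value_at_def)
  then have "serve (Node l x r) (x # ks) m0" using m0 by fastforce
  then show ?thesis unfolding Cont_def using m0 by blast
qed

lemma top_tree_sub: "top_tree t S \<Longrightarrow> S \<subseteq> set_tree t"
  by (cases t) auto

lemma bb_comm: "block_boundaries A B = block_boundaries B A"
  unfolding block_boundaries_def block_first_def block_last_def by blast

lemma msort_bst: "msort xs T a \<Longrightarrow> bst T \<and> set_tree T = set xs"
  by (induction rule: msort.induct) (auto simp: bst_merge_def)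

lemma make_top:
  fixes TA TB T U :: "'a::linorder tree"
  assumes bU: "bst U" and iT: "istop T U" and bA: "bst TA" and bT: "bst T"
    and tA: "top_tree TA (\<tau> \<inter> set_tree TA)" and tT: "top_tree T \<tau>"
    and dis: "set_tree TA \<inter> set_tree TB = {}"
    and tau: "\<tau> \<subseteq> set_tree TA \<union> set_tree TB"
    and hg: "\<forall>s\<in>hanging \<tau> T. s \<in> subtrees TA \<or> s \<in> subtrees TB"
    and bb: "block_boundaries (set_tree TA) (set_tree TB) \<subseteq> \<tau>"
    and sT: "set_tree T = set_tree TA \<union> set_tree TB"
  shows "\<exists>V. bst V \<and> istop TA V \<and> flat \<tau> V = flat \<tau> U"
proof -
  have g: "good \<tau> TA (flat \<tau> T)" using merge_good[OF bA bT tA tT dis tau hg bb sT] .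
  have "\<tau> \<subseteq> set_tree T" using top_tree_sub[OF tT] .
  then have rel: "list_all2 R (flat \<tau> T) (flat \<tau> U)" using flat_rel[OF iT bU] by blast
  have g': "good \<tau> TA (flat \<tau> U)" using good_transfer[OF g rel] flat_Inl_rootok by blast
  define V where "V = ext \<tau> TA (flat \<tau> U)"
  have e: "flat \<tau> V = flat \<tau> U" "istop TA V" using good_ext[OF g'] unfolding V_def by auto
  have "bst V"
  proof (rule flat_bst[of \<tau>])
    show "sorted_wrt lt_item (flat \<tau> V)" using e flat_sorted[OF bU] by simp
    show "\<forall>h. Inl h \<in> set (flat \<tau> V) \<longrightarrow> bst h" using e flat_Inl_bst[OF _ bU] by simp
  qed
  then show ?thesis using e by blast
qed

lemma main:
  "msort xs T a \<Longrightarrow> bst U \<Longrightarrow> istop T U \<Longrightarrow> Cont U ks m' \<Longrightarrow> Cont U (xs @ ks) (48 * a + m')"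
proof (induction arbitrary: U ks m' rule: msort.induct)
  case (single x)
  then obtain l' r' where "U = Node l' x r'" by (cases U) auto
  then show ?case using single cont_base by simp
next
  case (merge xs ys TA a TB b T m)
  from merge.hyps(5) obtain \<tau>a \<tau>b where M: "bst TA" "bst TB" "set_tree TA \<inter> set_tree TB = {}"
    "top_tree TA \<tau>a" "top_tree TB \<tau>b" "bst T" "set_tree T = set_tree TA \<union> set_tree TB"
    "top_tree T (\<tau>a \<union> \<tau>b)" "\<forall>s \<in> hanging (\<tau>a \<union> \<tau>b) T. s \<in> subtrees TA \<or> s \<in> subtrees TB"
    "block_boundaries (set_tree TA) (set_tree TB) \<subseteq> \<tau>a \<union> \<tau>b" "m = card (\<tau>a \<union> \<tau>b)"
    unfolding bst_merge_def by blast
  define \<tau> where "\<tau> = \<tau>a \<union> \<tau>b"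
  have sa: "\<tau>a \<subseteq> set_tree TA" "\<tau>b \<subseteq> set_tree TB" using top_tree_sub M(4,5) by auto
  have tA: "top_tree TA (\<tau> \<inter> set_tree TA)"
  proof -
    have "\<tau> \<inter> set_tree TA = \<tau>a" using sa M(3) unfolding \<tau>_def by blast
    then show ?thesis using M(4) by simp
  qed
  have tB: "top_tree TB (\<tau> \<inter> set_tree TB)"
  proof -
    have "\<tau> \<inter> set_tree TB = \<tau>b" using sa M(3) unfolding \<tau>_def by blast
    then show ?thesis using M(5) by simp
  qed
  have tT: "top_tree T \<tau>" using M(8) unfolding \<tau>_def .
  have tau: "\<tau> \<subseteq> set_tree TA \<union> set_tree TB" "\<tau> \<subseteq> set_tree TB \<union> set_tree TA" using sa unfolding \<tau>_def by auto
  have hg: "\<forall>s\<in>hanging \<tau> T. s \<in> subtrees TA \<or> s \<in> subtrees TB"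
    "\<forall>s\<in>hanging \<tau> T. s \<in> subtrees TB \<or> s \<in> subtrees TA" using M(9) unfolding \<tau>_def by blast+
  have bb: "block_boundaries (set_tree TA) (set_tree TB) \<subseteq> \<tau>"
    "block_boundaries (set_tree TB) (set_tree TA) \<subseteq> \<tau>" using M(10) bb_comm unfolding \<tau>_def by blast+
  have dis: "set_tree TB \<inter> set_tree TA = {}" using M(3) by blast
  have sT: "set_tree T = set_tree TB \<union> set_tree TA" using M(7) by blast
  obtain VA where VA: "bst VA" "istop TA VA" "flat \<tau> VA = flat \<tau> U"
    using make_top[OF merge.prems(1,2) M(1) M(6) tA tT M(3) tau(1) hg(1) bb(1) M(7)] by blast
  obtain VB where VB: "bst VB" "istop TB VB" "flat \<tau> VB = flat \<tau> U"
    using make_top[OF merge.prems(1,2) M(2) M(6) tB tT dis tau(2) hg(2) bb(2) sT] by blast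
  have fin: "finite \<tau>" using finite_subset[OF top_tree_sub[OF tT]] by simp
  have cm: "card \<tau> = m" using M(11) unfolding \<tau>_def by simp
  obtain d1 where d1: "d1 \<le> 16 * m" "((VB,[]),(U,[])) \<in> bst_step ^^ d1"
    using distance[OF VB(1) merge.prems(1) VB(3) fin] cm by auto
  obtain d2 where d2: "d2 \<le> 16 * m" "((VA,[]),(VB,[])) \<in> bst_step ^^ d2"
    using distance[OF VA(1) VB(1) _ fin] VA(3) VB(3) cm by auto
  obtain d3 where d3: "d3 \<le> 16 * m" "((U,[]),(VA,[])) \<in> bst_step ^^ d3"
    using distance[OF merge.prems(1) VA(1) _ fin] VA(3) cm by auto
  have c1: "Cont VB ks (d1 + m')" using cont_prepend[OF d1(2) merge.prems(3)] .
  have c2: "Cont VB (ys @ ks) (48 * b + (d1 + m'))" using merge.IH(2)[OF VB(1) VB(2) c1] .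
  have c3: "Cont VA (ys @ ks) (d2 + (48 * b + (d1 + m')))" using cont_prepend[OF d2(2) c2] .
  have c4: "Cont VA (xs @ ys @ ks) (48 * a + (d2 + (48 * b + (d1 + m'))))" using merge.IH(1)[OF VA(1) VA(2) c3] .
  have c5: "Cont U (xs @ ys @ ks) (d3 + (48 * a + (d2 + (48 * b + (d1 + m')))))" using cont_prepend[OF d3(2) c4] .
  have "d3 + (48 * a + (d2 + (48 * b + (d1 + m')))) \<le> 48 * (a + b + m) + m'" using d1 d2 d3 by simp
  then show ?case using cont_mono[OF c5] by simp
qed

theorem theorem4:
  shows "\<exists>c::nat. \<forall>(n::nat) (\<pi>::nat list) T a.
           distinct \<pi> \<and> set \<pi> = {1..n} \<and> msort \<pi> T a \<longrightarrow> opt_bst \<pi> \<le> c * a + c"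
proof (intro exI[of _ 48] allI impI)
  fix n :: nat and \<pi> :: "nat list" and T a
  assume "distinct \<pi> \<and> set \<pi> = {1..n} \<and> msort \<pi> T a"
  then have ms: "msort \<pi> T a" by blast
  have bT: "bst T" "set_tree T = set \<pi>" using msort_bst[OF ms] by auto
  have "Cont T [] 0" unfolding Cont_def by simp
  then have "Cont T (\<pi> @ []) (48 * a + 0)" using main[OF ms bT(1) istop_refl] by blast
  then obtain m0 where m0: "m0 \<le> 48 * a" "serve T \<pi> m0" unfolding Cont_def by auto
  have "opt_bst \<pi> \<le> m0" unfolding opt_bst_def
    by (rule Least_le) (use bT m0 in blast)
  then show "opt_bst \<pi> \<le> 48 * a + 48" using m0 by simp
qed

end
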